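(* Let $m\geq 2$, $h\geq 1$, and let $G=T^+_{m,h}$ with root $r$, stem $r'$, and extended subtrees $G_1,\ldots,G_m$. Let $S\subseteq V(G)\setminus\{r'\}$. If $S\cup\{r'\}$ is a power dominating set for $G$, then for every $i\in[m]$ the set $(S\cap V(G_i))\cup\{r\}$ is a power dominating set for $G_i$.
   Context: For a graph $G=(V,E)$ and $S\subseteq V$: $\mathcal{P}^0(S)=N[S]$ (closed neighborhood of $S$), and for $k\geq 1$, $\mathcal{P}^k(S)=\mathcal{P}^{k-1}(S)\cup N^*(\mathcal{P}^{k-1}(S))$, where $x\in N^*(A)$ iff there is $a\in A$ such that $x$ is the only neighbor of $a$ not in $A$. For finite $G$ this stabilizes at $\mathcal{P}^\infty(S)$; $S$ is a power dominating set for $G$ if $\mathcal{P}^\infty(S)=V$. $T_{m,h}$ denotes the complete $m$-ary tree of height $h$ (every non-leaf vertex has exactly $m$ children, all leaves at distance $h$ from the root), rooted at $r$. The extended $m$-ary tree $T^+_{m,h}$ is obtained from $T_{m,h}$ by adding a new vertex $r'$ (the stem) and the edge $\{r,r'\}$. For $G=T_{m,h}$ or $G=T^+_{m,h}$ with $h\ge 1$, let $r_1,\ldots,r_m$ be the children of $r$, let $V_i$ be the set of descendants of $r_i$, and let $G_i=G[V_i\cup\{r_i,r\}]$ be the $i$-th extended subtree; $G_i$ is an extended $m$-ary tree of height $h-1$ with root $r_i$ and stem $r$. *)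

theory Defs
  imports Main
begin

definition closed_nbhd :: "'a set \<Rightarrow> ('a \<Rightarrow> 'a \<Rightarrow> bool) \<Rightarrow> 'a set \<Rightarrow> 'a set" where
  "closed_nbhd V E S = S \<union> {v \<in> V. \<exists>s\<in>S. E s v}"

definition forced_nbrs :: "'a set \<Rightarrow> ('a \<Rightarrow> 'a \<Rightarrow> bool) \<Rightarrow> 'a set \<Rightarrow> 'a set" where
  "forced_nbrs V E A = {x \<in> V. \<exists>a\<in>A. x \<notin> A \<and> E a x \<and> (\<forall>y\<in>V. E a y \<and> y \<notin> A \<longrightarrow> y = x)}"

fun pd_step :: "'a set \<Rightarrow> ('a \<Rightarrow> 'a \<Rightarrow> bool) \<Rightarrow> 'a set \<Rightarrow> nat \<Rightarrow> 'a set" where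
  "pd_step V E S 0 = closed_nbhd V E S"
| "pd_step V E S (Suc k) = pd_step V E S k \<union> forced_nbrs V E (pd_step V E S k)"

definition pd_closure :: "'a set \<Rightarrow> ('a \<Rightarrow> 'a \<Rightarrow> bool) \<Rightarrow> 'a set \<Rightarrow> 'a set" where
  "pd_closure V E S = (\<Union>k. pd_step V E S k)"

definition power_dominating :: "'a set \<Rightarrow> ('a \<Rightarrow> 'a \<Rightarrow> bool) \<Rightarrow> 'a set \<Rightarrow> bool" where
  "power_dominating V E S \<longleftrightarrow> S \<subseteq> V \<and> pd_closure V E S = V"

definition induced_adj :: "('a \<Rightarrow> 'a \<Rightarrow> bool) \<Rightarrow> 'a set \<Rightarrow> 'a \<Rightarrow> 'a \<Rightarrow> bool" where
  "induced_adj E W u v \<longleftrightarrow> u \<in> W \<and> v \<in> W \<and> E u v"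

text \<open>Vertices: \<open>Some xs\<close> for a word xs over {0..<m} of length \<le> h (the word
  is the path from the root; root r = Some []), and the stem r' = None.\<close>

definition ext_tree_V :: "nat \<Rightarrow> nat \<Rightarrow> nat list option set" where
  "ext_tree_V m h = insert None (Some ` {xs. length xs \<le> h \<and> set xs \<subseteq> {..<m}})"

definition tree_root :: "nat list option" where "tree_root = Some []"
definition tree_stem :: "nat list option" where "tree_stem = None"

definition ext_tree_E :: "nat \<Rightarrow> nat \<Rightarrow> nat list option \<Rightarrow> nat list option \<Rightarrow> bool" where
  "ext_tree_E m h u v \<longleftrightarrow> u \<in> ext_tree_V m h \<and> v \<in> ext_tree_V m h \<and>
     ((u = tree_stem \<and> v = tree_root) \<or> (v = tree_stem \<and> u = tree_root) \<or>
      (\<exists>xs j. u = Some xs \<and> v = Some (xs @ [j])) \<or>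
      (\<exists>xs j. v = Some xs \<and> u = Some (xs @ [j])))"

text \<open>The i-th child of the root (children indexed 0..m-1), its set of
  descendants V_i, and the vertex set of the i-th extended subtree G_i.\<close>
definition root_child :: "nat \<Rightarrow> nat list option" where "root_child i = Some [i]"

definition descendants_V :: "nat \<Rightarrow> nat \<Rightarrow> nat \<Rightarrow> nat list option set" where
  "descendants_V m h i = {Some (i # ys) | ys. ys \<noteq> [] \<and> Suc (length ys) \<le> h \<and> set ys \<subseteq> {..<m}}"

definition ext_subtree_V :: "nat \<Rightarrow> nat \<Rightarrow> nat \<Rightarrow> nat list option set" where
  "ext_subtree_V m h i = descendants_V m h i \<union> {root_child i, tree_root}"

definition ext_subtree_E :: "nat \<Rightarrow> nat \<Rightarrow> nat \<Rightarrow> nat list option \<Rightarrow> nat list option \<Rightarrow> bool" where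
  "ext_subtree_E m h i = induced_adj (ext_tree_E m h) (ext_subtree_V m h i)"

end

theory Submission
  imports Defs
begin

lemma step_mono_le: "k \<le> l \<Longrightarrow> pd_step V E S k \<subseteq> pd_step V E S l"
  by (rule lift_Suc_mono_le[of "pd_step V E S"]) auto

lemma finite_common:
  assumes "finite F" shows "F \<subseteq> pd_closure V E S \<Longrightarrow> \<exists>K. F \<subseteq> pd_step V E S K"
  using assms
proof (induction F rule: finite_induct)
  case empty then show ?case by auto
next
  case (insert y F)
  then obtain K where K: "F \<subseteq> pd_step V E S K" by auto
  from insert obtain k where k: "y \<in> pd_step V E S k" unfolding pd_closure_def by auto
  have "F \<subseteq> pd_step V E S (max K k)" using K step_mono_le[of K "max K k" V E S] by auto
  moreover have "y \<in> pd_step V E S (max K k)" using k step_mono_le[of k "max K k" V E S] by auto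
  ultimately have "insert y F \<subseteq> pd_step V E S (max K k)" by blast
  then show ?case by blast
qed

lemma closure_force:
  assumes fin: "finite V" and a: "a \<in> pd_closure V E S" and x: "x \<in> V" "E a x"
    and oth: "\<forall>y\<in>V. E a y \<and> y \<noteq> x \<longrightarrow> y \<in> pd_closure V E S"
  shows "x \<in> pd_closure V E S"
proof -
  let ?F = "insert a {y\<in>V. E a y \<and> y \<noteq> x}"
  have f1: "finite ?F" using fin by simp
  have f2: "?F \<subseteq> pd_closure V E S" using a oth by blast
  obtain K where K: "?F \<subseteq> pd_step V E S K" using finite_common[OF f1 f2] by blast
  show ?thesis
  proof (cases "x \<in> pd_step V E S K")
    case True then show ?thesis unfolding pd_closure_def by auto
  next
    case False
    have aK: "a \<in> pd_step V E S K" using K by auto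
    have oK: "\<forall>y\<in>V. E a y \<and> y \<notin> pd_step V E S K \<longrightarrow> y = x" using K by blast
    have "x \<in> forced_nbrs V E (pd_step V E S K)"
      unfolding forced_nbrs_def using False aK oK x by blast
    then have "x \<in> pd_step V E S (Suc K)" by simp
    then show ?thesis unfolding pd_closure_def by blast
  qed
qed

lemma step_subset: "S \<subseteq> V \<Longrightarrow> pd_step V E S k \<subseteq> V"
  by (induction k) (auto simp: closed_nbhd_def forced_nbrs_def)

lemma closure_subset: "S \<subseteq> V \<Longrightarrow> pd_closure V E S \<subseteq> V"
  unfolding pd_closure_def using step_subset by blast

lemma step0_closure: "pd_step V E S 0 \<subseteq> pd_closure V E S"
  unfolding pd_closure_def by blast

lemma finite_V: "finite (ext_tree_V m h)"
proof -
  have "finite {xs. set xs \<subseteq> {..<m} \<and> length xs \<le> h}"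
    by (rule finite_lists_length_le) auto
  then show ?thesis unfolding ext_tree_V_def by (simp add: conj_commute)
qed

lemma W_char:
  assumes "i < m" "h \<ge> 1"
  shows "ext_subtree_V m h i = {v \<in> ext_tree_V m h. v = Some [] \<or> (\<exists>ys. v = Some (i # ys))}"
proof (rule set_eqI, rule iffI)
  fix v assume "v \<in> ext_subtree_V m h i"
  then have "v \<in> descendants_V m h i \<or> v = Some [i] \<or> v = Some []"
    unfolding ext_subtree_V_def root_child_def tree_root_def by blast
  then show "v \<in> {v \<in> ext_tree_V m h. v = Some [] \<or> (\<exists>ys. v = Some (i # ys))}"
  proof (elim disjE)
    assume "v \<in> descendants_V m h i"
    then obtain ys where "v = Some (i # ys)" "Suc (length ys) \<le> h" "set ys \<subseteq> {..<m}"
      unfolding descendants_V_def by blast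
    then show ?thesis using assms unfolding ext_tree_V_def by auto
  qed (use assms in \<open>auto simp: ext_tree_V_def\<close>)
next
  fix v assume "v \<in> {v \<in> ext_tree_V m h. v = Some [] \<or> (\<exists>ys. v = Some (i # ys))}"
  then have vV: "v \<in> ext_tree_V m h" and "v = Some [] \<or> (\<exists>ys. v = Some (i # ys))" by auto
  then show "v \<in> ext_subtree_V m h i"
  proof (elim disjE exE)
    fix ys assume v: "v = Some (i # ys)"
    show ?thesis
    proof (cases "ys = []")
      case True then show ?thesis using v unfolding ext_subtree_V_def root_child_def by auto
    next
      case False
      have "length (i # ys) \<le> h" "set (i # ys) \<subseteq> {..<m}" using vV v unfolding ext_tree_V_def by auto
      then have "v \<in> descendants_V m h i" using False v unfolding descendants_V_def by auto
      then show ?thesis unfolding ext_subtree_V_def by auto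
    qed
  qed (auto simp: ext_subtree_V_def tree_root_def)
qed

lemma boundary:
  assumes "i < m" "h \<ge> 1" "ext_tree_E m h a x" "x \<in> ext_subtree_V m h i"
    "a \<notin> ext_subtree_V m h i"
  shows "x = tree_root"
proof -
  note Wc = W_char[OF assms(1,2)]
  have aV: "a \<in> ext_tree_V m h" using assms(3) ext_tree_E_def by auto
  have x: "x = Some [] \<or> (\<exists>ys. x = Some (i # ys))" using assms(4) Wc by blast
  have na: "\<not> (a = Some [] \<or> (\<exists>ys. a = Some (i # ys)))" using assms(5) aV Wc by blast
  have a: "a = None \<or> (\<exists>j zs. a = Some (j # zs) \<and> j \<noteq> i)"
  proof (cases a)
    case (Some xs) then show ?thesis using na by (cases xs) auto
  qed simp
  have E: "(a = tree_stem \<and> x = tree_root) \<or> (x = tree_stem \<and> a = tree_root) \<or>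
      (\<exists>xs j. a = Some xs \<and> x = Some (xs @ [j])) \<or>
      (\<exists>xs j. x = Some xs \<and> a = Some (xs @ [j]))" using assms(3) unfolding ext_tree_E_def by blast
  show ?thesis
  proof (rule ccontr)
    assume nr: "x \<noteq> tree_root"
    then obtain ys where ys: "x = Some (i # ys)" using x unfolding tree_root_def by auto
    then have "a \<noteq> tree_stem" "x \<noteq> tree_stem" using E nr unfolding tree_stem_def by auto
    then have E2: "(\<exists>xs j. a = Some xs \<and> x = Some (xs @ [j])) \<or>
      (\<exists>xs j. x = Some xs \<and> a = Some (xs @ [j]))" using E nr by blast
    from a show False
    proof
      assume "a = None" then show False using E2 by auto
    next
      assume "\<exists>j zs. a = Some (j # zs) \<and> j \<noteq> i"
      then obtain j zs where jz: "a = Some (j # zs)" "j \<noteq> i" by blast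
      show False using E2
      proof
        assume "\<exists>xs j. a = Some xs \<and> x = Some (xs @ [j])"
        then obtain xs k where "a = Some xs" "x = Some (xs @ [k])" by blast
        then show False using jz ys by auto
      next
        assume "\<exists>xs j. x = Some xs \<and> a = Some (xs @ [j])"
        then obtain xs k where "x = Some xs" "a = Some (xs @ [k])" by blast
        then show False using jz ys by auto
      qed
    qed
  qed
qed

theorem mainTheorem1:
  fixes m h :: nat and S :: "nat list option set"
  assumes "m \<ge> 2" and "h \<ge> 1"
    and "S \<subseteq> ext_tree_V m h - {tree_stem}"
    and "power_dominating (ext_tree_V m h) (ext_tree_E m h) (S \<union> {tree_stem})"
  shows "\<forall>i<m. power_dominating (ext_subtree_V m h i) (ext_subtree_E m h i)
                 ((S \<inter> ext_subtree_V m h i) \<union> {tree_root})"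
proof (intro allI impI)
  fix i assume i: "i < m"
  define V where "V = ext_tree_V m h"
  define E where "E = ext_tree_E m h"
  define W where "W = ext_subtree_V m h i"
  define Ei where "Ei = ext_subtree_E m h i"
  define S' where "S' = (S \<inter> W) \<union> {tree_root}"
  define C where "C = pd_closure W Ei S'"
  have rW: "tree_root \<in> W" unfolding W_def ext_subtree_V_def by auto
  have WV: "W \<subseteq> V" using W_char[OF i assms(2)] unfolding W_def V_def by auto
  have finW: "finite W" using finite_V WV rev_finite_subset unfolding V_def by blast
  have stW: "tree_stem \<notin> W" using W_char[OF i assms(2)] unfolding W_def tree_stem_def by auto
  have Ei: "\<And>u v. Ei u v \<longleftrightarrow> u \<in> W \<and> v \<in> W \<and> E u v"
    unfolding Ei_def ext_subtree_E_def induced_adj_def W_def E_def by simp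
  have S'W: "S' \<subseteq> W" using rW unfolding S'_def by auto
  have rC: "tree_root \<in> C" using step0_closure[of W Ei S'] unfolding C_def S'_def
    by (auto simp: closed_nbhd_def)
  have bd: "\<And>a x. E a x \<Longrightarrow> x \<in> W \<Longrightarrow> a \<notin> W \<Longrightarrow> x = tree_root"
    using boundary[OF i assms(2)] unfolding E_def W_def by blast
  have EV: "\<And>a x. E a x \<Longrightarrow> a \<in> V \<and> x \<in> V" unfolding E_def V_def ext_tree_E_def by auto
  have inv: "pd_step V E (S \<union> {tree_stem}) k \<inter> W \<subseteq> C" for k
  proof (induction k)
    case 0
    show ?case
    proof
      fix x assume x: "x \<in> pd_step V E (S \<union> {tree_stem}) 0 \<inter> W"
      then have xW: "x \<in> W" by auto
      from x have "x \<in> S \<union> {tree_stem} \<or> (\<exists>s\<in>S \<union> {tree_stem}. E s x)"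
        by (auto simp: closed_nbhd_def)
      then show "x \<in> C"
      proof
        assume "x \<in> S \<union> {tree_stem}"
        then have "x \<in> S'" using xW stW unfolding S'_def by auto
        then show ?thesis using step0_closure[of W Ei S'] unfolding C_def
          by (auto simp: closed_nbhd_def)
      next
        assume "\<exists>s\<in>S \<union> {tree_stem}. E s x"
        then obtain s where s: "s \<in> S \<union> {tree_stem}" "E s x" by auto
        show ?thesis
        proof (cases "s \<in> W")
          case True
          then have "s \<in> S'" using s stW unfolding S'_def by auto
          then have "x \<in> closed_nbhd W Ei S'" using s xW True Ei
            unfolding closed_nbhd_def by auto
          then show ?thesis using step0_closure[of W Ei S'] unfolding C_def by auto
        next
          case False
          then show ?thesis using bd s xW rC by auto
        qed
      qed
    qed
  next
    case (Suc k)
    let ?A = "pd_step V E (S \<union> {tree_stem}) k"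
    show ?case
    proof
      fix x assume x: "x \<in> pd_step V E (S \<union> {tree_stem}) (Suc k) \<inter> W"
      then have xW: "x \<in> W" by auto
      show "x \<in> C"
      proof (cases "x \<in> ?A")
        case True then show ?thesis using Suc.IH xW by auto
      next
        case False
        with x have "x \<in> forced_nbrs V E ?A" by auto
        then obtain a where a: "a \<in> ?A" "E a x" "\<forall>y\<in>V. E a y \<and> y \<notin> ?A \<longrightarrow> y = x"
          unfolding forced_nbrs_def by auto
        show ?thesis
        proof (cases "a \<in> W")
          case False then show ?thesis using bd a xW rC by auto
        next
          case True
          have aC: "a \<in> C" using Suc.IH True a by auto
          have oth: "\<forall>y\<in>W. Ei a y \<and> y \<noteq> x \<longrightarrow> y \<in> C"
          proof (intro ballI impI)
            fix y assume y: "y \<in> W" "Ei a y \<and> y \<noteq> x"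
            then have "E a y" using Ei by auto
            then have "y \<in> ?A" using a EV y by blast
            then show "y \<in> C" using Suc.IH y by auto
          qed
          show ?thesis unfolding C_def
            by (rule closure_force[OF finW]) (use aC oth xW a True Ei in \<open>auto simp: C_def\<close>)
        qed
      qed
    qed
  qed
  have "V = pd_closure V E (S \<union> {tree_stem})"
    using assms(4) unfolding power_dominating_def V_def E_def by auto
  then have "W \<subseteq> C" using WV inv unfolding pd_closure_def by blast
  moreover have "C \<subseteq> W" unfolding C_def using closure_subset[OF S'W] .
  ultimately show "power_dominating (ext_subtree_V m h i) (ext_subtree_E m h i)
                 ((S \<inter> ext_subtree_V m h i) \<union> {tree_root})"
    unfolding power_dominating_def using S'W
    unfolding C_def S'_def W_def Ei_def by auto
qed

end
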